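(* Let $\mathcal{A}$ be a set of $N$ arms, $N\ge B\ge 1$, $\epsilon>0$, and let $S_t$ denote the set of arms chosen in round $t$ by $\mathbf{FPML}(B,\epsilon)$ in the full feedback setting. Then \[\max_{c_1,\dots,c_T}\mathbb{E}\left[(1-\epsilon^B)\sum_{t=1}^T c_t(S_t)-\min_{a^*\in\mathcal{A}}\sum_{t=1}^T c_t(a^* )\right]\le\frac{1+\ln(N)}{\epsilon}.\] In particular, for $\epsilon=((\ln(N)+1)/T)^{1/(B+1)}$, \[R_T^*(\mathbf{FPML})\le 2T^{\frac{1}{B+1}}(1+\ln(N))^{\frac{B}{B+1}}.\]
   Context: Setting: in each round $t=1,\dots,T$ an oblivious adversary fixes $c_t:\mathcal{A}\to[0,1]$ (the maximum above is over all such sequences); the algorithm picks $S_t\subset\mathcal{A}$ with $|S_t|=B$ and incurs cost $c_t(S_t):=\min_{a\in S_t}c_t(a)$; afterwards $c_t$ is revealed (full feedback). $R_T^*(\mathbf{ALG}):=\max_{c_1,\dots,c_T}\mathbb{E}\left[\sum_{t=1}^T c_t(S_t)-\min_{a^*\in\mathcal{A}}\sum_{t=1}^T c_t(a^* )\right]$. Algorithm $\mathbf{FPML}(B,\epsilon)$ (Follow the Perturbed Multiple Leaders): set $C_0(a)=0$ for all $a$. In round $t$: for each arm $a$ draw independently $p_t(a)$ from the exponential distribution with rate $\epsilon$ (mean $1/\epsilon$); compute $\tilde C_{t-1}(a)=C_{t-1}(a)-p_t(a)$; pull the $B$ arms with the lowest values of $\tilde C_{t-1}$ (ties broken arbitrarily);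 then update $C_t(a)=C_{t-1}(a)+c_t(a)$. *)

theory Defs
  imports "HOL-Probability.Probability"
begin

text \<open>Probability space of all perturbations: the values p_t(a) for rounds
t in {0..<T} (round t+1 of the paper is index t) and arms a in A, i.i.d.
exponential with rate eps. The completion is taken so that the algorithm's
cost is measurable for every tie-breaking rule (ties have probability zero).\<close>
definition fpml_space :: "real \<Rightarrow> nat \<Rightarrow> 'a set \<Rightarrow> ((nat \<times> 'a) \<Rightarrow> real) measure" where
  "fpml_space eps T A =
     completion (PiM ({..<T} \<times> A) (\<lambda>_. density lborel (exponential_density eps)))"

definition valid_tiebreak :: "'a set \<Rightarrow> nat \<Rightarrow> (nat \<Rightarrow> ('a \<Rightarrow> real) \<Rightarrow> 'a set) \<Rightarrow> bool" where
  "valid_tiebreak A B sel \<longleftrightarrow>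
     (\<forall>t v. sel t v \<subseteq> A \<and> card (sel t v) = B \<and>
            (\<forall>a\<in>sel t v. \<forall>b\<in>A - sel t v. v a \<le> v b))"

definition cum_cost :: "(nat \<Rightarrow> 'a \<Rightarrow> real) \<Rightarrow> nat \<Rightarrow> 'a \<Rightarrow> real" where
  "cum_cost c t a = (\<Sum>s<t. c s a)"

definition fpml_set :: "(nat \<Rightarrow> ('a \<Rightarrow> real) \<Rightarrow> 'a set) \<Rightarrow> (nat \<Rightarrow> 'a \<Rightarrow> real)
     \<Rightarrow> ((nat \<times> 'a) \<Rightarrow> real) \<Rightarrow> nat \<Rightarrow> 'a set" where
  "fpml_set sel c \<omega> t = sel t (\<lambda>a. cum_cost c t a - \<omega> (t, a))"

definition fpml_cost :: "(nat \<Rightarrow> ('a \<Rightarrow> real) \<Rightarrow> 'a set) \<Rightarrow> (nat \<Rightarrow> 'a \<Rightarrow> real)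
     \<Rightarrow> nat \<Rightarrow> ((nat \<times> 'a) \<Rightarrow> real) \<Rightarrow> real" where
  "fpml_cost sel c T \<omega> = (\<Sum>t<T. Min (c t ` fpml_set sel c \<omega> t))"

definition best_arm_cost :: "'a set \<Rightarrow> (nat \<Rightarrow> 'a \<Rightarrow> real) \<Rightarrow> nat \<Rightarrow> real" where
  "best_arm_cost A c T = Min ((\<lambda>a. \<Sum>t<T. c t a) ` A)"

definition valid_costs :: "'a set \<Rightarrow> (nat \<Rightarrow> 'a \<Rightarrow> real) \<Rightarrow> bool" where
  "valid_costs A c \<longleftrightarrow> (\<forall>t. \<forall>a\<in>A. 0 \<le> c t a \<and> c t a \<le> 1)"

end

theory Submission
  imports Defs
begin

abbreviation Expo :: "real \<Rightarrow> real measure" where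
  "Expo e \<equiv> density lborel (exponential_density e)"

lemma Expo_prob: "0 < e \<Longrightarrow> prob_space (Expo e)"
  by (rule prob_space_exponential_density)

lemma Expo_distributed: "0 < e \<Longrightarrow> distributed (Expo e) lborel (\<lambda>x. x) (exponential_density e)"
  unfolding distributed_def
  by (auto simp: exponential_density_nonneg distr_id2 intro!: density_cong)

lemma Expo_space[simp]: "space (Expo e) = UNIV" by simp
lemma Expo_sets[simp]: "sets (Expo e) = sets borel" by simp

lemma Expo_singleton: "emeasure (Expo e) {x} = 0"
  by (simp add: emeasure_density)

lemma Expo_le: "0 < e \<Longrightarrow> 0 \<le> a \<Longrightarrow> measure (Expo e) {x. x \<le> a} = 1 - exp (- a * e)"
  using prob_space.exponential_distributedD_le[OF Expo_prob Expo_distributed, of e a] by simp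

lemma Expo_gt: "0 < e \<Longrightarrow> 0 \<le> a \<Longrightarrow> measure (Expo e) {x. a < x} = exp (- a * e)"
  using prob_space.exponential_distributedD_gt[OF Expo_prob Expo_distributed, of e a] by simp

lemma Expo_le_neg: "0 < e \<Longrightarrow> a < 0 \<Longrightarrow> measure (Expo e) {x. x \<le> a} = 0"
proof -
  assume e: "0 < e" and a: "a < 0"
  have "emeasure (Expo e) {x. x \<le> a} = (\<integral>\<^sup>+x. ennreal (exponential_density e x) * indicator {x. x \<le> a} x \<partial>lborel)"
    by (subst emeasure_density) (auto simp: nn_integral_set_ennreal)
  also have "\<dots> = (\<integral>\<^sup>+x. 0 \<partial>(lborel::real measure))"
    by (intro nn_integral_cong) (use a in \<open>auto simp: exponential_density_def indicator_def\<close>)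
  finally show ?thesis by (simp add: measure_def)
qed

lemma Expo_ge_neg: "0 < e \<Longrightarrow> a < 0 \<Longrightarrow> measure (Expo e) {a..} = 1"
proof -
  assume e: "0 < e" and a: "a < 0"
  interpret prob_space "Expo e" by (rule Expo_prob[OF e])
  have "measure (Expo e) (UNIV - {x. x \<le> a}) = 1 - measure (Expo e) {x. x \<le> a}"
    by (subst finite_measure_Diff) (auto simp: prob_space[simplified])
  moreover have "UNIV - {x. x \<le> a} = {a<..}" by auto
  ultimately have "measure (Expo e) {a<..} = 1" using Expo_le_neg[OF e a] by simp
  moreover have "measure (Expo e) {a<..} \<le> measure (Expo e) {a..}"
    by (intro finite_measure_mono) auto
  ultimately show ?thesis using prob_le_1[of "{a..}"] by simp
qed

lemma Expo_window:
  assumes e: "0 < e"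
  shows "measure (Expo e) {th..th+1} \<le> e * measure (Expo e) {th..}"
proof -
  interpret prob_space "Expo e" by (rule Expo_prob[OF e])
  have one: "1 - exp (- e) \<le> e" using exp_ge_add_one_self[of "-e"] by simp
  have split: "measure (Expo e) {th..th+1} \<le> measure (Expo e) {th} + measure (Expo e) {th<..th+1}"
  proof -
    have "{th..th+1} = {th} \<union> {th<..th+1}" by auto
    then show ?thesis using measure_Un_le[of "{th}" "Expo e" "{th<..th+1}"] by simp
  qed
  have sing: "measure (Expo e) {th} = 0" using Expo_singleton[of e th] by (simp add: measure_def)
  show ?thesis
  proof (cases "0 \<le> th")
    case True
    have d: "{th<..th+1} = {x. x \<le> th+1} - {x. x \<le> th}" by auto
    have "measure (Expo e) {th<..th+1} = measure (Expo e) {x. x \<le> th+1} - measure (Expo e) {x. x \<le> th}"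
      unfolding d by (subst finite_measure_Diff) auto
    also have "\<dots> = exp (- th * e) * (1 - exp (- e))"
      using True e by (simp add: Expo_le algebra_simps exp_add[symmetric])
    also have "\<dots> \<le> exp (- th * e) * e" using one by (intro mult_left_mono) auto
    finally have A: "measure (Expo e) {th<..th+1} \<le> exp (- th * e) * e" .
    have "exp (- th * e) = measure (Expo e) {x. th < x}" using Expo_gt[OF e True] by simp
    also have "\<dots> \<le> measure (Expo e) {th..}" by (intro finite_measure_mono) auto
    finally have B: "exp (- th * e) \<le> measure (Expo e) {th..}" .
    have "e * exp (- th * e) \<le> e * measure (Expo e) {th..}" using mult_left_mono[OF B, of e] e by simp
    then show ?thesis using split sing A by (simp add: mult.commute)
  next
    case False
    have "measure (Expo e) {th<..th+1} \<le> measure (Expo e) {x. x \<le> th + 1}"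
      by (intro finite_measure_mono) auto
    also have "\<dots> \<le> e"
    proof (cases "0 \<le> th + 1")
      case True
      have "exp (- e) \<le> exp (- (th + 1) * e)"
        using False e mult_nonneg_nonneg[of "-th" e] by (simp add: algebra_simps)
      then show ?thesis using Expo_le[OF e True] one by linarith
    next
      case False
      then show ?thesis using Expo_le_neg[OF e, of "th+1"] e by simp
    qed
    finally show ?thesis using split sing Expo_ge_neg[OF e, of th] False by simp
  qed
qed

lemma Expo_dens_lborel:
  assumes e: "0 < e"
  shows "integrable lborel (\<lambda>x. exponential_density e x * x)"
    and "(\<integral>x. exponential_density e x * x \<partial>lborel) = 1 / e"
proof -
  note D = Expo_distributed[OF e]
  have nn: "AE x in lborel. 0 \<le> exponential_density e x"
    using e by (auto simp: exponential_density_nonneg)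
  have i: "integrable (Expo e) (\<lambda>x. x ^ 1)"
    by (rule prob_space.erlang_ith_moment_integrable[OF Expo_prob[OF e] e D])
  have v: "integral\<^sup>L (Expo e) (\<lambda>x. x ^ 1) = fact (0 + 1) / (fact 0 * e ^ 1)"
    by (rule prob_space.erlang_ith_moment[OF Expo_prob[OF e] e D])
  have i': "integrable (Expo e) (\<lambda>x. x)" using i by simp
  then show "integrable lborel (\<lambda>x. exponential_density e x * x)"
    using integrable_density[of "\<lambda>x. x" lborel "exponential_density e"] nn by simp
  have "integral\<^sup>L (Expo e) (\<lambda>x. x) = (\<integral>x. exponential_density e x * x \<partial>lborel)"
    using integral_density[of "\<lambda>x. x" lborel "exponential_density e"] nn by simp
  then show "(\<integral>x. exponential_density e x * x \<partial>lborel) = 1 / e"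
    using v by simp
qed

lemma Expo_tail:
  assumes e: "0 < e" and u: "0 \<le> u"
  shows "integrable (Expo e) (\<lambda>x. max (x - u) 0)"
    and "(\<integral>x. max (x - u) 0 \<partial>Expo e) = exp (- u * e) / e"
proof -
  have nn: "AE x in lborel. 0 \<le> exponential_density e x"
    using e by (auto simp: exponential_density_nonneg)
  have eq: "exponential_density e (u + 1 * x) *\<^sub>R max (u + 1 * x - u) 0
            = exp (- u * e) * (exponential_density e x * x)" for x
    using u e by (auto simp: exponential_density_def algebra_simps exp_add[symmetric] max_def)
  have i1: "integrable lborel (\<lambda>x. exp (- u * e) * (exponential_density e x * x))"
    using Expo_dens_lborel(1)[OF e] by simp
  have "integrable lborel (\<lambda>x. exponential_density e x *\<^sub>R max (x - u) 0)"
    using lborel_integrable_real_affine_iff[of 1 "\<lambda>x. exponential_density e x *\<^sub>R max (x - u) 0" u] i1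
    unfolding eq by simp
  then show "integrable (Expo e) (\<lambda>x. max (x - u) 0)"
    using nn by (subst integrable_density) auto
  have "(\<integral>x. max (x - u) 0 \<partial>Expo e) = (\<integral>x. exponential_density e x *\<^sub>R max (x - u) 0 \<partial>lborel)"
    using nn by (subst integral_density) auto
  also have "\<dots> = (\<integral>x. exponential_density e (u + 1 * x) *\<^sub>R max (u + 1 * x - u) 0 \<partial>lborel)"
    using lborel_integral_real_affine[of 1 "\<lambda>x. exponential_density e x *\<^sub>R max (x - u) 0" u] by simp
  also have "\<dots> = (\<integral>x. exp (- u * e) * (exponential_density e x * x) \<partial>lborel)"
    unfolding eq ..
  also have "\<dots> = exp (- u * e) / e"
    using Expo_dens_lborel[OF e] by simp
  finally show "(\<integral>x. max (x - u) 0 \<partial>Expo e) = exp (- u * e) / e" .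
qed

lemma Expo_AE_nonneg: "AE x in Expo e. 0 \<le> x"
  by (subst AE_density) (auto simp: exponential_density_def intro!: AE_I2)

abbreviation PP :: "real \<Rightarrow> 'a set \<Rightarrow> ('a \<Rightarrow> real) measure" where
  "PP e A \<equiv> PiM A (\<lambda>_. Expo e)"

lemma PP_prob: "0 < e \<Longrightarrow> prob_space (PP e A)"
  by (intro prob_space_PiM Expo_prob)

lemma Expo_psf: "0 < e \<Longrightarrow> product_sigma_finite (\<lambda>_. Expo e)"
  unfolding product_sigma_finite_def
  using Expo_prob prob_space_imp_sigma_finite by blast

lemma PP_tie_null:
  assumes e: "0 < e" and A: "finite A" and a: "a \<in> A" and b: "b \<in> A" and ab: "a \<noteq> b"
  shows "AE p in PP e A. p a \<noteq> p b + d"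
proof -
  interpret product_sigma_finite "\<lambda>_. Expo e" by (rule Expo_psf[OF e])
  let ?S = "{p \<in> space (PP e A). p a = p b + d}"
  have S: "?S \<in> sets (PP e A)" using a b by measurable
  have ins: "insert a (A - {a}) = A" using a by auto
  have "emeasure (PP e A) ?S = (\<integral>\<^sup>+p. indicator ?S p \<partial>PP e A)"
    using S by simp
  also have "\<dots> = (\<integral>\<^sup>+p. indicator ?S p \<partial>PP e (insert a (A - {a})))"
    by (simp only: ins)
  also have "\<dots> = (\<integral>\<^sup>+x. (\<integral>\<^sup>+y. indicator ?S (x(a := y)) \<partial>Expo e) \<partial>PP e (A - {a}))"
    using A S by (intro product_nn_integral_insert) (simp_all only: ins, auto)
  also have "\<dots> = (\<integral>\<^sup>+x. (\<integral>\<^sup>+y. indicator {x b + d} y \<partial>Expo e) \<partial>PP e (A - {a}))"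
  proof (intro nn_integral_cong)
    fix x y assume x: "x \<in> space (PP e (A - {a}))"
    have "x(a := y) \<in> space (PP e A)"
      using x a by (auto simp: space_PiM PiE_iff extensional_def)
    then show "indicator ?S (x(a := y)) = (indicator {x b + d} y :: ennreal)"
      using ab by (auto simp: indicator_def)
  qed
  also have "\<dots> = 0"
    by (simp add: Expo_singleton)
  finally show ?thesis
    by (intro AE_I[of _ _ ?S]) (use S in auto)
qed

lemma PP_ties:
  assumes e: "0 < e" and A: "finite A"
  shows "AE p in PP e A. \<forall>a\<in>A. \<forall>b\<in>A. a \<noteq> b \<longrightarrow> C a - p a \<noteq> C b - p b"
proof -
  have "AE p in PP e A. \<forall>ab\<in>A \<times> A. fst ab \<noteq> snd ab \<longrightarrow> p (fst ab) \<noteq> p (snd ab) + (C (fst ab) - C (snd ab))"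
    using A by (intro AE_finite_allI) (auto intro: PP_tie_null[OF e A])
  then show ?thesis
  proof eventually_elim
    case (elim p)
    show ?case
    proof (intro ballI impI)
      fix x y assume "x \<in> A" "y \<in> A" "x \<noteq> y"
      then have "p x \<noteq> p y + (C x - C y)" using elim by auto
      then show "C x - p x \<noteq> C y - p y" by linarith
    qed
  qed
qed

lemma PP_component: "0 < e \<Longrightarrow> a \<in> A \<Longrightarrow> distr (PP e A) (Expo e) (\<lambda>p. p a) = Expo e"
  by (rule distr_PiM_component) (auto intro: Expo_prob)

lemma PP_AE_nonneg:
  assumes e: "0 < e" and A: "finite A"
  shows "AE p in PP e A. \<forall>a\<in>A. 0 \<le> p a"
  using A by (intro AE_finite_allI AE_PiM_component Expo_prob e Expo_AE_nonneg) auto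

definition GG :: "'a set \<Rightarrow> 'a set \<Rightarrow> ('a \<Rightarrow> real) \<Rightarrow> bool" where
  "GG A T w \<longleftrightarrow> (\<forall>b\<in>T. \<forall>a\<in>A - T. w b \<le> w a)"

definition lead :: "'a set \<Rightarrow> ('a \<Rightarrow> nat) \<Rightarrow> ('a \<Rightarrow> real) \<Rightarrow> 'a \<Rightarrow> bool" where
  "lead A idx w a \<longleftrightarrow> a \<in> A \<and> (\<forall>b\<in>A. w a \<le> w b) \<and> (\<forall>b\<in>A. w b = w a \<longrightarrow> idx a \<le> idx b)"

lemma slice_eq:
  assumes A: "finite A" and T: "T \<subseteq> A" and ne: "A - T \<noteq> {}"
    and q: "q \<in> space (PP e (A - T))"
    and m: "m = Min ((\<lambda>a. C a - q a) ` (A - T))"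
  shows "(\<lambda>y. merge (A - T) T (q, y)) -` {p \<in> space (PP e A). \<forall>b\<in>T. (\<forall>a\<in>A-T. C b - p b \<le> C a - p a)
            \<and> (\<exists>a\<in>A-T. C a - p a \<le> C b - p b + 1)} \<inter> space (PP e T)
         = PiE T (\<lambda>b. {C b - m .. C b - m + 1})"
    and "(\<lambda>y. merge (A - T) T (q, y)) -` {p \<in> space (PP e A). \<forall>b\<in>T. (\<forall>a\<in>A-T. C b - p b \<le> C a - p a)} \<inter> space (PP e T)
         = PiE T (\<lambda>b. {C b - m ..})"
proof -
  have dis: "(A - T) \<inter> T = {}" by auto
  have un: "(A - T) \<union> T = A" using T by auto
  have fin: "finite ((\<lambda>a. C a - q a) ` (A - T))" "(\<lambda>a. C a - q a) ` (A - T) \<noteq> {}"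
    using A ne by auto
  have sp: "merge (A - T) T (q, y) \<in> space (PP e A)" if "y \<in> space (PP e T)" for y
    using that q un by (auto simp: space_PiM PiE_iff extensional_def merge_def)
  have key1: "(\<forall>a\<in>A-T. C b - y b \<le> C a - q a) \<longleftrightarrow> C b - m \<le> y b" for b y
  proof -
    have "C b - y b \<le> m \<longleftrightarrow> (\<forall>a\<in>A-T. C b - y b \<le> C a - q a)"
      using fin unfolding m by (simp add: Min_ge_iff)
    then show ?thesis by linarith
  qed
  have key2: "(\<exists>a\<in>A-T. C a - q a \<le> C b - y b + 1) \<longleftrightarrow> y b \<le> C b - m + 1" for b y
  proof -
    have "m \<le> C b - y b + 1 \<longleftrightarrow> (\<exists>a\<in>A-T. C a - q a \<le> C b - y b + 1)"
      using fin unfolding m by (simp add: Min_le_iff)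
    then show ?thesis by linarith
  qed
  have mg: "merge (A - T) T (q, y) a = q a" if "a \<in> A - T" for a y
    using that dis by simp
  have mg2: "merge (A - T) T (q, y) b = y b" if "b \<in> T" for b y
    using that dis by simp
  show "(\<lambda>y. merge (A - T) T (q, y)) -` {p \<in> space (PP e A). \<forall>b\<in>T. (\<forall>a\<in>A-T. C b - p b \<le> C a - p a)
            \<and> (\<exists>a\<in>A-T. C a - p a \<le> C b - p b + 1)} \<inter> space (PP e T)
         = PiE T (\<lambda>b. {C b - m .. C b - m + 1})"
  proof (intro set_eqI iffI)
    fix y assume y: "y \<in> (\<lambda>y. merge (A - T) T (q, y)) -` {p \<in> space (PP e A). \<forall>b\<in>T. (\<forall>a\<in>A-T. C b - p b \<le> C a - p a)
            \<and> (\<exists>a\<in>A-T. C a - p a \<le> C b - p b + 1)} \<inter> space (PP e T)"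
    then have ys: "y \<in> space (PP e T)" by auto
    have "\<forall>b\<in>T. (\<forall>a\<in>A-T. C b - y b \<le> C a - q a) \<and> (\<exists>a\<in>A-T. C a - q a \<le> C b - y b + 1)"
      using y by (simp add: mg mg2 cong: rev_conj_cong)
    then have "\<forall>b\<in>T. C b - m \<le> y b \<and> y b \<le> C b - m + 1" using key1 key2 by blast
    then show "y \<in> PiE T (\<lambda>b. {C b - m .. C b - m + 1})"
      using ys by (auto simp: space_PiM PiE_iff)
  next
    fix y assume y: "y \<in> PiE T (\<lambda>b. {C b - m .. C b - m + 1})"
    then have ys: "y \<in> space (PP e T)" by (auto simp: space_PiM PiE_iff)
    have "\<forall>b\<in>T. C b - m \<le> y b \<and> y b \<le> C b - m + 1" using y by (auto simp: PiE_iff)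
    then have "\<forall>b\<in>T. (\<forall>a\<in>A-T. C b - y b \<le> C a - q a) \<and> (\<exists>a\<in>A-T. C a - q a \<le> C b - y b + 1)"
      using key1 key2 by blast
    then show "y \<in> (\<lambda>y. merge (A - T) T (q, y)) -` {p \<in> space (PP e A). \<forall>b\<in>T. (\<forall>a\<in>A-T. C b - p b \<le> C a - p a)
            \<and> (\<exists>a\<in>A-T. C a - p a \<le> C b - p b + 1)} \<inter> space (PP e T)"
      using ys sp[OF ys] by (simp add: mg mg2 cong: rev_conj_cong)
  qed
  show "(\<lambda>y. merge (A - T) T (q, y)) -` {p \<in> space (PP e A). \<forall>b\<in>T. (\<forall>a\<in>A-T. C b - p b \<le> C a - p a)} \<inter> space (PP e T)
         = PiE T (\<lambda>b. {C b - m ..})"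
  proof (intro set_eqI iffI)
    fix y assume y: "y \<in> (\<lambda>y. merge (A - T) T (q, y)) -` {p \<in> space (PP e A). \<forall>b\<in>T. (\<forall>a\<in>A-T. C b - p b \<le> C a - p a)} \<inter> space (PP e T)"
    then have ys: "y \<in> space (PP e T)" by auto
    have "\<forall>b\<in>T. (\<forall>a\<in>A-T. C b - y b \<le> C a - q a)"
      using y by (simp add: mg mg2 cong: rev_conj_cong)
    then have "\<forall>b\<in>T. C b - m \<le> y b" using key1 by blast
    then show "y \<in> PiE T (\<lambda>b. {C b - m ..})"
      using ys by (auto simp: space_PiM PiE_iff)
  next
    fix y assume y: "y \<in> PiE T (\<lambda>b. {C b - m ..})"
    then have ys: "y \<in> space (PP e T)" by (auto simp: space_PiM PiE_iff)
    have "\<forall>b\<in>T. C b - m \<le> y b" using y by (auto simp: PiE_iff)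
    then have "\<forall>b\<in>T. (\<forall>a\<in>A-T. C b - y b \<le> C a - q a)"
      using key1 by blast
    then show "y \<in> (\<lambda>y. merge (A - T) T (q, y)) -` {p \<in> space (PP e A). \<forall>b\<in>T. (\<forall>a\<in>A-T. C b - p b \<le> C a - p a)} \<inter> space (PP e T)"
      using ys sp[OF ys] by (simp add: mg mg2 cong: rev_conj_cong)
  qed
qed

lemma PP_comp_meas: "a \<in> A \<Longrightarrow> (\<lambda>p. p a) \<in> borel_measurable (PP e A)"
proof -
  assume a: "a \<in> A"
  have "(\<lambda>p. p a) \<in> PP e A \<rightarrow>\<^sub>M Expo e" by (rule measurable_component_singleton[OF a])
  then show ?thesis by (simp add: measurable_cong_sets[OF refl Expo_sets])
qed

lemma PP_pred_le:
  assumes "a \<in> A" "b \<in> A"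
  shows "Measurable.pred (PP e A) (\<lambda>p. x - p a \<le> y - p b)"
  apply (rule pred_def[THEN iffD2])
  apply (rule borel_measurable_le)
  using PP_comp_meas[OF assms(1), of e] PP_comp_meas[OF assms(2), of e]
  by (auto intro!: borel_measurable_add borel_measurable_diff)

lemma PP_pred_le1:
  assumes "a \<in> A" "b \<in> A"
  shows "Measurable.pred (PP e A) (\<lambda>p. x - p a \<le> y - p b + 1)"
  apply (rule pred_def[THEN iffD2])
  apply (rule borel_measurable_le)
  using PP_comp_meas[OF assms(1), of e] PP_comp_meas[OF assms(2), of e]
  by (auto intro!: borel_measurable_add borel_measurable_diff)

lemma window_prod:
  assumes e: "0 < e" and T: "finite T"
  shows "emeasure (PP e T) (PiE T (\<lambda>b. {th b .. th b + 1}))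
         \<le> ennreal (e ^ card T) * emeasure (PP e T) (PiE T (\<lambda>b. {th b ..}))"
proof -
  interpret prob_space "Expo e" by (rule Expo_prob[OF e])
  interpret product_sigma_finite "\<lambda>_. Expo e" by (rule Expo_psf[OF e])
  interpret fps: finite_product_sigma_finite "\<lambda>_. Expo e" T by standard (rule T)
  have "emeasure (PP e T) (PiE T (\<lambda>b. {th b .. th b + 1})) = (\<Prod>b\<in>T. emeasure (Expo e) {th b .. th b + 1})"
    by (subst fps.measure_times) auto
  also have "\<dots> = ennreal (\<Prod>b\<in>T. measure (Expo e) {th b .. th b + 1})"
    by (simp add: emeasure_eq_measure prod_ennreal)
  also have "\<dots> \<le> ennreal (\<Prod>b\<in>T. e * measure (Expo e) {th b ..})"
    using Expo_window[OF e] by (intro ennreal_leI prod_mono) auto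
  also have "\<dots> = ennreal (e ^ card T) * ennreal (\<Prod>b\<in>T. measure (Expo e) {th b ..})"
    using e by (simp add: prod.distrib ennreal_mult[symmetric] prod_nonneg)
  also have "ennreal (\<Prod>b\<in>T. measure (Expo e) {th b ..}) = emeasure (PP e T) (PiE T (\<lambda>b. {th b ..}))"
    by (subst fps.measure_times) (auto simp: emeasure_eq_measure prod_ennreal)
  finally show ?thesis .
qed

lemma cond_bound:
  assumes e: "0 < e" and A: "finite A" and T: "T \<subseteq> A"
  shows "emeasure (PP e A) {p \<in> space (PP e A). \<forall>b\<in>T. (\<forall>a\<in>A-T. C b - p b \<le> C a - p a)
            \<and> (\<exists>a\<in>A-T. C a - p a \<le> C b - p b + 1)}
         \<le> ennreal (e ^ card T) * emeasure (PP e A) {p \<in> space (PP e A). \<forall>b\<in>T. (\<forall>a\<in>A-T. C b - p b \<le> C a - p a)}"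
proof (cases "A - T = {}")
  case True
  show ?thesis
  proof (cases "T = {}")
    case False
    then have "{p \<in> space (PP e A). \<forall>b\<in>T. (\<forall>a\<in>A-T. C b - p b \<le> C a - p a)
            \<and> (\<exists>a\<in>A-T. C a - p a \<le> C b - p b + 1)} = {}"
      using True by blast
    then show ?thesis by (simp only:) simp
  qed simp
next
  case ne: False
  interpret product_sigma_finite "\<lambda>_. Expo e" by (rule Expo_psf[OF e])
  let ?E = "{p \<in> space (PP e A). \<forall>b\<in>T. (\<forall>a\<in>A-T. C b - p b \<le> C a - p a)
            \<and> (\<exists>a\<in>A-T. C a - p a \<le> C b - p b + 1)}"
  let ?G = "{p \<in> space (PP e A). \<forall>b\<in>T. (\<forall>a\<in>A-T. C b - p b \<le> C a - p a)}"
  have un: "(A - T) \<union> T = A" using T by auto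
  have fT: "finite T" "finite (A - T)" using A T finite_subset by auto
  have Es: "?E \<in> sets (PP e A)"
    unfolding pred_def[symmetric]
    using fT T PP_pred_le[where A=A and e=e] PP_pred_le1[where A=A and e=e]
    by (intro pred_intros_finite pred_intros_logic) (auto simp: subset_iff)
  have Gs: "?G \<in> sets (PP e A)"
    unfolding pred_def[symmetric]
    using fT T PP_pred_le[where A=A and e=e]
    by (intro pred_intros_finite pred_intros_logic) (auto simp: subset_iff)
  have Es': "?E \<in> sets (PP e ((A - T) \<union> T))" using Es by (simp only: un)
  have Gs': "?G \<in> sets (PP e ((A - T) \<union> T))" using Gs by (simp only: un)
  have "emeasure (PP e A) ?E = emeasure (PP e ((A - T) \<union> T)) ?E" by (simp only: un)
  also have "\<dots> = (\<integral>\<^sup>+q. emeasure (PP e T) ((\<lambda>y. merge (A - T) T (q, y)) -` ?E \<inter> space (PP e T)) \<partial>PP e (A - T))"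
    using fT Es' by (intro emeasure_fold_integral) auto
  also have "\<dots> = (\<integral>\<^sup>+q. emeasure (PP e T) (PiE T (\<lambda>b. {C b - Min ((\<lambda>a. C a - q a) ` (A - T)) .. C b - Min ((\<lambda>a. C a - q a) ` (A - T)) + 1})) \<partial>PP e (A - T))"
    by (intro nn_integral_cong arg_cong2[where f=emeasure] refl slice_eq(1)[OF A T ne]) simp
  also have "\<dots> \<le> (\<integral>\<^sup>+q. ennreal (e ^ card T) * emeasure (PP e T) (PiE T (\<lambda>b. {C b - Min ((\<lambda>a. C a - q a) ` (A - T)) ..})) \<partial>PP e (A - T))"
    by (intro nn_integral_mono window_prod[OF e fT(1)])
  also have "\<dots> = (\<integral>\<^sup>+q. ennreal (e ^ card T) * emeasure (PP e T) ((\<lambda>y. merge (A - T) T (q, y)) -` ?G \<inter> space (PP e T)) \<partial>PP e (A - T))"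
    by (intro nn_integral_cong arg_cong2[where f="(*)"] arg_cong2[where f=emeasure] refl slice_eq(2)[OF A T ne, symmetric]) simp
  also have "\<dots> = ennreal (e ^ card T) * (\<integral>\<^sup>+q. emeasure (PP e T) ((\<lambda>y. merge (A - T) T (q, y)) -` ?G \<inter> space (PP e T)) \<partial>PP e (A - T))"
    using fT Gs' by (intro nn_integral_cmult emeasure_fold_measurable) auto
  also have "(\<integral>\<^sup>+q. emeasure (PP e T) ((\<lambda>y. merge (A - T) T (q, y)) -` ?G \<inter> space (PP e T)) \<partial>PP e (A - T))
      = emeasure (PP e ((A - T) \<union> T)) ?G"
    using fT Gs' by (intro emeasure_fold_integral[symmetric]) auto
  also have "\<dots> = emeasure (PP e A) ?G" by (simp only: un)
  finally show ?thesis .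
qed

definition subsB :: "'a set \<Rightarrow> nat \<Rightarrow> 'a set set" where
  "subsB A B = {T. T \<subseteq> A \<and> card T = B}"

definition hpay :: "'a set \<Rightarrow> nat \<Rightarrow> ('a \<Rightarrow> real) \<Rightarrow> ('a \<Rightarrow> real) \<Rightarrow> real" where
  "hpay A B c w = (\<Sum>T\<in>subsB A B. if GG A T w then Min (c ` T) else 0)"

definition lcost :: "'a set \<Rightarrow> ('a \<Rightarrow> nat) \<Rightarrow> ('a \<Rightarrow> real) \<Rightarrow> ('a \<Rightarrow> real) \<Rightarrow> real" where
  "lcost A idx c w = (\<Sum>a\<in>A. if lead A idx w a then c a else 0)"

definition tiefree :: "'a set \<Rightarrow> ('a \<Rightarrow> real) \<Rightarrow> bool" where
  "tiefree A w \<longleftrightarrow> (\<forall>a\<in>A. \<forall>b\<in>A. a \<noteq> b \<longrightarrow> w a \<noteq> w b)"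

lemma finite_subsB: "finite A \<Longrightarrow> finite (subsB A B)"
  unfolding subsB_def by (rule finite_subset[of _ "Pow A"]) auto

lemma GG_unique:
  assumes A: "finite A" and tf: "tiefree A w"
    and T1: "T1 \<in> subsB A B" and T2: "T2 \<in> subsB A B"
    and G1: "GG A T1 w" and G2: "GG A T2 w"
  shows "T1 = T2"
proof (rule ccontr)
  assume ne: "T1 \<noteq> T2"
  have s1: "T1 \<subseteq> A" "card T1 = B" and s2: "T2 \<subseteq> A" "card T2 = B"
    using T1 T2 by (auto simp: subsB_def)
  have f1: "finite T1" "finite T2" using s1 s2 A finite_subset by auto
  have "\<not> T1 \<subseteq> T2"
  proof
    assume "T1 \<subseteq> T2"
    then have "T1 = T2" using card_subset_eq[OF f1(2)] s1 s2 by auto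
    then show False using ne by simp
  qed
  then obtain x where x: "x \<in> T1" "x \<notin> T2" by auto
  have "\<not> T2 \<subseteq> T1"
  proof
    assume "T2 \<subseteq> T1"
    then have "T2 = T1" using card_subset_eq[OF f1(1)] s1 s2 by auto
    then show False using ne by simp
  qed
  then obtain y where y: "y \<in> T2" "y \<notin> T1" by auto
  have "w x \<le> w y" using G1 x y s2 unfolding GG_def by auto
  moreover have "w y \<le> w x" using G2 x y s1 unfolding GG_def by auto
  ultimately have "w x = w y" by simp
  moreover have "x \<noteq> y" using x y by auto
  ultimately show False using tf x y s1 s2 unfolding tiefree_def by auto
qed

lemma lead_exists:
  assumes A: "finite A" "A \<noteq> {}"
  shows "\<exists>a. lead A idx w a"
proof -
  obtain a0 where a0: "a0 \<in> A" "w a0 = Min (w ` A)"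
    using A by (metis (no_types, lifting) Min_in finite_imageI image_iff image_is_empty)
  let ?S = "{a\<in>A. \<forall>b\<in>A. w a \<le> w b}"
  have "a0 \<in> ?S" using a0 A by auto
  then obtain a where a: "a \<in> ?S" and am: "\<And>y. y \<in> ?S \<Longrightarrow> idx a \<le> idx y"
    using ex_has_least_nat[of "\<lambda>x. x \<in> ?S" a0 idx] by blast
  have "lead A idx w a"
    unfolding lead_def
  proof (intro conjI ballI impI)
    show "a \<in> A" using a by auto
    fix b assume b: "b \<in> A"
    show "w a \<le> w b" using a b by auto
    assume "w b = w a"
    then have "b \<in> ?S" using a b by auto
    then show "idx a \<le> idx b" by (rule am)
  qed
  then show ?thesis by blast
qed

lemma lead_unique:
  assumes inj: "inj_on idx A" and l1: "lead A idx w a" and l2: "lead A idx w a'"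
  shows "a = a'"
proof -
  have "a \<in> A" "a' \<in> A" using l1 l2 by (auto simp: lead_def)
  moreover have "w a = w a'" using l1 l2 \<open>a \<in> A\<close> \<open>a' \<in> A\<close> unfolding lead_def by (meson order_antisym)
  then have "idx a = idx a'" using l1 l2 \<open>a \<in> A\<close> \<open>a' \<in> A\<close> unfolding lead_def by (metis order_antisym)
  ultimately show ?thesis using inj by (auto dest: inj_onD)
qed

lemma lcost_lead:
  assumes inj: "inj_on idx A" and A: "finite A" and l: "lead A idx w a"
  shows "lcost A idx c w = c a"
proof -
  have aA: "a \<in> A" using l by (simp add: lead_def)
  have "lcost A idx c w = (\<Sum>b\<in>A. if b = a then c a else 0)"
    unfolding lcost_def
  proof (intro sum.cong refl)
    fix b assume "b \<in> A"
    show "(if lead A idx w b then c b else 0) = (if b = a then c a else 0)"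
    proof (cases "b = a")
      case True then show ?thesis using l by simp
    next
      case False
      then have "\<not> lead A idx w b" using lead_unique[OF inj l, of b] by auto
      then show ?thesis using False by simp
    qed
  qed
  also have "\<dots> = c a" using A aA by simp
  finally show ?thesis .
qed

lemma lcost_nonneg:
  assumes "\<forall>a\<in>A. 0 \<le> c a"
  shows "0 \<le> lcost A idx c w"
  unfolding lcost_def using assms by (intro sum_nonneg) auto

lemma pointwise_lower:
  assumes A: "finite A" and inj: "inj_on idx A" and tf: "tiefree A w"
    and c: "\<forall>a\<in>A. 0 \<le> c a"
  shows "(\<Sum>T\<in>subsB A B. if GG A T w \<and> (\<exists>a\<in>T. lead A idx w' a) then Min (c ` T) else 0)
         \<le> lcost A idx c w'"
proof (cases "\<exists>T0\<in>subsB A B. GG A T0 w \<and> (\<exists>a\<in>T0. lead A idx w' a)")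
  case False
  then have "(\<Sum>T\<in>subsB A B. if GG A T w \<and> (\<exists>a\<in>T. lead A idx w' a) then Min (c ` T) else 0) = 0"
    by (intro sum.neutral) auto
  then show ?thesis using lcost_nonneg[OF c] by simp
next
  case True
  then obtain T0 a where T0: "T0 \<in> subsB A B" "GG A T0 w" and a: "a \<in> T0" "lead A idx w' a" by blast
  have T0A: "T0 \<subseteq> A" using T0 by (simp add: subsB_def)
  have fT0: "finite T0" using T0A A finite_subset by auto
  have "(\<Sum>T\<in>subsB A B. if GG A T w \<and> (\<exists>a\<in>T. lead A idx w' a) then Min (c ` T) else 0)
      = (\<Sum>T\<in>subsB A B. if T = T0 then Min (c ` T0) else 0)"
  proof (intro sum.cong refl)
    fix T assume T: "T \<in> subsB A B"
    show "(if GG A T w \<and> (\<exists>a\<in>T. lead A idx w' a) then Min (c ` T) else 0) = (if T = T0 then Min (c ` T0) else 0)"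
    proof (cases "T = T0")
      case True then show ?thesis using T0 a by auto
    next
      case False
      then have "\<not> GG A T w" using GG_unique[OF A tf T T0(1) _ T0(2)] by blast
      then show ?thesis using False by simp
    qed
  qed
  also have "\<dots> = Min (c ` T0)" using finite_subsB[OF A] T0 by simp
  also have "\<dots> \<le> c a" using fT0 a by simp
  also have "\<dots> = lcost A idx c w'" using lcost_lead[OF inj A a(2)] by simp
  finally show ?thesis .
qed

lemma hpay_tiefree:
  assumes A: "finite A" and tf: "tiefree A w" and S: "S \<in> subsB A B" and G: "GG A S w"
  shows "hpay A B c w = Min (c ` S)"
proof -
  have "hpay A B c w = (\<Sum>T\<in>subsB A B. if T = S then Min (c ` S) else 0)"
    unfolding hpay_def
  proof (intro sum.cong refl)
    fix T assume T: "T \<in> subsB A B"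
    show "(if GG A T w then Min (c ` T) else 0) = (if T = S then Min (c ` S) else 0)"
    proof (cases "T = S")
      case True then show ?thesis using G by auto
    next
      case False
      then have "\<not> GG A T w" using GG_unique[OF A tf T S _ G] by blast
      then show ?thesis using False by simp
    qed
  qed
  also have "\<dots> = Min (c ` S)" using finite_subsB[OF A] S by simp
  finally show ?thesis .
qed

lemma PP_pred_eq:
  assumes "a \<in> A" "b \<in> A"
  shows "Measurable.pred (PP e A) (\<lambda>p. x - p a = y - p b)"
  apply (rule pred_def[THEN iffD2])
  apply (rule borel_measurable_eq)
  using PP_comp_meas[OF assms(1), of e] PP_comp_meas[OF assms(2), of e]
  by (auto intro!: borel_measurable_add borel_measurable_diff)

lemma PP_pred_lead:
  assumes A: "finite A"
  shows "Measurable.pred (PP e A) (\<lambda>p. lead A idx (\<lambda>x. D x - p x) a)"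
proof (cases "a \<in> A")
  case True
  show ?thesis
    unfolding lead_def
    using A True PP_pred_le[where A=A and e=e] PP_pred_eq[where A=A and e=e]
    by (intro pred_intros_finite pred_intros_logic measurable_const) auto
next
  case False
  then show ?thesis unfolding lead_def by simp
qed

lemma PP_pred_GG:
  assumes A: "finite A" and T: "T \<subseteq> A"
  shows "Measurable.pred (PP e A) (\<lambda>p. GG A T (\<lambda>x. D x - p x))"
proof -
  have fT: "finite T" "finite (A - T)" using A T finite_subset by auto
  show ?thesis
    unfolding GG_def
    using fT T PP_pred_le[where A=A and e=e]
    by (intro pred_intros_finite pred_intros_logic) (auto simp: subset_iff)
qed

lemma round_bound:
  assumes e: "0 < e" and A: "finite A" and inj: "inj_on idx A" and B: "1 \<le> B"
    and c: "\<forall>a\<in>A. 0 \<le> c a \<and> c a \<le> 1"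
  shows "(1 - e ^ B) * (\<integral>p. hpay A B c (\<lambda>a. C a - p a) \<partial>PP e A)
         \<le> (\<integral>p. lcost A idx c (\<lambda>a. C a + c a - p a) \<partial>PP e A)"
proof -
  interpret prob_space "PP e A" by (rule PP_prob[OF e])
  define Gt where "Gt T = {p \<in> space (PP e A). GG A T (\<lambda>a. C a - p a)}" for T
  define Lt where "Lt T = {p \<in> space (PP e A). \<exists>a\<in>T. lead A idx (\<lambda>a. C a + c a - p a) a}" for T
  define La where "La a = {p \<in> space (PP e A). lead A idx (\<lambda>a. C a + c a - p a) a}" for a
  define mu where "mu T = Min (c ` T)" for T
  have subsA: "T \<subseteq> A" "card T = B" if "T \<in> subsB A B" for T using that by (auto simp: subsB_def)
  have fin: "finite (subsB A B)" by (rule finite_subsB[OF A])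
  have mu_nn: "0 \<le> mu T" if "T \<in> subsB A B" for T
  proof -
    have "finite T" "T \<noteq> {}" using subsA[OF that] A B finite_subset by auto
    then show ?thesis unfolding mu_def using subsA[OF that] c by (auto simp: Min_ge_iff)
  qed
  have Gt_sets: "Gt T \<in> sets (PP e A)" if "T \<in> subsB A B" for T
    unfolding Gt_def pred_def[symmetric] using PP_pred_GG[OF A subsA(1)[OF that]] .
  have La_sets: "La a \<in> sets (PP e A)" for a
    unfolding La_def pred_def[symmetric] using PP_pred_lead[OF A] .
  have Lt_sets: "Lt T \<in> sets (PP e A)" if "T \<in> subsB A B" for T
  proof -
    have "finite T" using subsA[OF that] A finite_subset by auto
    then show ?thesis
      unfolding Lt_def pred_def[symmetric] using PP_pred_lead[OF A]
      by (intro pred_intros_finite pred_intros_logic) auto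
  qed
  have I1: "(\<integral>p. hpay A B c (\<lambda>a. C a - p a) \<partial>PP e A) = (\<Sum>T\<in>subsB A B. mu T * measure (PP e A) (Gt T))"
  proof -
    have "(\<integral>p. hpay A B c (\<lambda>a. C a - p a) \<partial>PP e A) = (\<integral>p. (\<Sum>T\<in>subsB A B. mu T * indicator (Gt T) p) \<partial>PP e A)"
      by (rule Bochner_Integration.integral_cong[OF refl]) (auto simp: hpay_def Gt_def mu_def indicator_def intro!: sum.cong)
    also have "\<dots> = (\<Sum>T\<in>subsB A B. mu T * measure (PP e A) (Gt T))"
      using Gt_sets sets.sets_into_space[OF Gt_sets]
      by (subst Bochner_Integration.integral_sum) (auto simp: Int_absorb2 less_top[symmetric] intro!: integrable_real_indicator)
    finally show ?thesis .
  qed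
  have I2: "(\<integral>p. (\<Sum>T\<in>subsB A B. mu T * indicator (Gt T \<inter> Lt T) p) \<partial>PP e A)
      = (\<Sum>T\<in>subsB A B. mu T * measure (PP e A) (Gt T \<inter> Lt T))"
    using Gt_sets Lt_sets sets.sets_into_space[OF Gt_sets]
    by (subst Bochner_Integration.integral_sum) (auto simp: Int_absorb2 Int_assoc less_top[symmetric] intro!: integrable_real_indicator)
  have M3: "(1 - e ^ B) * measure (PP e A) (Gt T) \<le> measure (PP e A) (Gt T \<inter> Lt T)"
    if T: "T \<in> subsB A B" for T
  proof -
    let ?E = "{p \<in> space (PP e A). \<forall>b\<in>T. (\<forall>a\<in>A-T. C b - p b \<le> C a - p a)
            \<and> (\<exists>a\<in>A-T. C a - p a \<le> C b - p b + 1)}"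
    let ?G = "{p \<in> space (PP e A). \<forall>b\<in>T. (\<forall>a\<in>A-T. C b - p b \<le> C a - p a)}"
    have GG: "Gt T = ?G" unfolding Gt_def GG_def by simp
    have sub: "Gt T - Lt T \<subseteq> ?E"
    proof
      fix p assume p: "p \<in> Gt T - Lt T"
      then have ps: "p \<in> space (PP e A)" and g: "GG A T (\<lambda>a. C a - p a)"
        and nl: "\<not> (\<exists>a\<in>T. lead A idx (\<lambda>a. C a + c a - p a) a)"
        by (auto simp: Gt_def Lt_def)
      show "p \<in> ?E"
      proof (cases "T = {}")
        case True then show ?thesis using ps by simp
      next
        case False
        then have "A \<noteq> {}" using subsA[OF T] by auto
        then obtain a where la: "lead A idx (\<lambda>a. C a + c a - p a) a" using lead_exists[OF A] by blast
        then have aA: "a \<in> A" "a \<notin> T" using nl by (auto simp: lead_def)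
        have "C a - p a \<le> C b - p b + 1" if b: "b \<in> T" for b
        proof -
          have "b \<in> A" using b subsA[OF T] by auto
          then have "C a + c a - p a \<le> C b + c b - p b" using la by (auto simp: lead_def)
          moreover have "0 \<le> c a" "c b \<le> 1" using c aA \<open>b \<in> A\<close> by auto
          ultimately show ?thesis by linarith
        qed
        then show ?thesis using ps g aA unfolding GG_def by blast
      qed
    qed
    have Es: "?E \<in> sets (PP e A)"
    proof -
      have fT: "finite T" "finite (A - T)" using A subsA[OF T] finite_subset by auto
      show ?thesis
        unfolding pred_def[symmetric]
        using fT subsA[OF T] PP_pred_le[where A=A and e=e] PP_pred_le1[where A=A and e=e]
        by (intro pred_intros_finite pred_intros_logic) (auto simp: subset_iff)
    qed
    have "ennreal (measure (PP e A) ?E) \<le> ennreal (e ^ B) * ennreal (measure (PP e A) ?G)"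
      using cond_bound[OF e A subsA(1)[OF T], of C] subsA(2)[OF T]
      by (simp add: emeasure_eq_measure)
    then have "measure (PP e A) ?E \<le> e ^ B * measure (PP e A) ?G"
      using e by (simp add: ennreal_mult[symmetric] ennreal_le_iff)
    moreover have "measure (PP e A) (Gt T - Lt T) \<le> measure (PP e A) ?E"
      using sub Es by (intro finite_measure_mono) auto
    moreover have "measure (PP e A) (Gt T - Lt T) = measure (PP e A) (Gt T) - measure (PP e A) (Gt T \<inter> Lt T)"
      using Gt_sets[OF T] Lt_sets[OF T] by (rule finite_measure_Diff')
    ultimately show ?thesis unfolding GG by (simp add: algebra_simps)
  qed
  have AE4: "AE p in PP e A. (\<Sum>T\<in>subsB A B. mu T * indicator (Gt T \<inter> Lt T) p)
        \<le> lcost A idx c (\<lambda>a. C a + c a - p a)"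
    using PP_ties[OF e A, of C]
  proof eventually_elim
    case (elim p)
    assume tf0: "\<forall>a\<in>A. \<forall>b\<in>A. a \<noteq> b \<longrightarrow> C a - p a \<noteq> C b - p b"
    then have tf: "tiefree A (\<lambda>a. C a - p a)" by (simp add: tiefree_def)
    show ?case
    proof (cases "p \<in> space (PP e A)")
      case True
      have "(\<Sum>T\<in>subsB A B. mu T * indicator (Gt T \<inter> Lt T) p)
          = (\<Sum>T\<in>subsB A B. if GG A T (\<lambda>a. C a - p a) \<and> (\<exists>a\<in>T. lead A idx (\<lambda>a. C a + c a - p a) a) then Min (c ` T) else 0)"
        using True by (intro sum.cong refl) (simp add: Gt_def Lt_def mu_def indicator_def)
      also have "\<dots> \<le> lcost A idx c (\<lambda>a. C a + c a - p a)"
        using c by (intro pointwise_lower[OF A inj tf]) auto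
      finally show ?thesis .
    next
      case False
      then have "(\<Sum>T\<in>subsB A B. mu T * indicator (Gt T \<inter> Lt T) p) = 0"
        by (intro sum.neutral) (auto simp: Gt_def indicator_def)
      then show ?thesis using lcost_nonneg[of A c] c by auto
    qed
  qed
  have lc_eq: "lcost A idx c (\<lambda>a. C a + c a - p a) = (\<Sum>a\<in>A. c a * indicator (La a) p)"
    if "p \<in> space (PP e A)" for p
    using that unfolding lcost_def La_def by (intro sum.cong refl) (auto simp: indicator_def)
  have int_lc: "integrable (PP e A) (\<lambda>p. lcost A idx c (\<lambda>a. C a + c a - p a))"
  proof -
    have "integrable (PP e A) (\<lambda>p. \<Sum>a\<in>A. c a * indicator (La a) p)"
      using La_sets by (auto intro!: Bochner_Integration.integrable_sum integrable_mult_right integrable_real_indicator simp: less_top[symmetric])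
    then show ?thesis using lc_eq by (subst Bochner_Integration.integrable_cong[OF refl]) auto
  qed
  have int_low: "integrable (PP e A) (\<lambda>p. \<Sum>T\<in>subsB A B. mu T * indicator (Gt T \<inter> Lt T) p)"
    using Gt_sets Lt_sets by (auto intro!: Bochner_Integration.integrable_sum integrable_mult_right integrable_real_indicator simp: less_top[symmetric])
  have "(1 - e ^ B) * (\<integral>p. hpay A B c (\<lambda>a. C a - p a) \<partial>PP e A)
      = (\<Sum>T\<in>subsB A B. mu T * ((1 - e ^ B) * measure (PP e A) (Gt T)))"
    unfolding I1 by (simp add: sum_distrib_left algebra_simps)
  also have "\<dots> \<le> (\<Sum>T\<in>subsB A B. mu T * measure (PP e A) (Gt T \<inter> Lt T))"
    using M3 mu_nn by (intro sum_mono mult_left_mono) auto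
  also have "\<dots> = (\<integral>p. (\<Sum>T\<in>subsB A B. mu T * indicator (Gt T \<inter> Lt T) p) \<partial>PP e A)"
    using I2 by simp
  also have "\<dots> \<le> (\<integral>p. lcost A idx c (\<lambda>a. C a + c a - p a) \<partial>PP e A)"
    using int_low int_lc AE4 by (rule integral_mono_AE)
  finally show ?thesis .
qed

lemma lcost_integrable:
  assumes e: "0 < e" and A: "finite A"
  shows "integrable (PP e A) (\<lambda>p. lcost A idx c (\<lambda>a. D a - p a))"
proof -
  interpret prob_space "PP e A" by (rule PP_prob[OF e])
  define La where "La a = {p \<in> space (PP e A). lead A idx (\<lambda>a. D a - p a) a}" for a
  have La_sets: "La a \<in> sets (PP e A)" for a
    unfolding La_def pred_def[symmetric] using PP_pred_lead[OF A] .
  have lc_eq: "lcost A idx c (\<lambda>a. D a - p a) = (\<Sum>a\<in>A. c a * indicator (La a) p)"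
    if "p \<in> space (PP e A)" for p
    using that unfolding lcost_def La_def by (intro sum.cong refl) (auto simp: indicator_def)
  have "integrable (PP e A) (\<lambda>p. \<Sum>a\<in>A. c a * indicator (La a) p)"
    using La_sets by (auto intro!: Bochner_Integration.integrable_sum integrable_mult_right integrable_real_indicator simp: less_top[symmetric])
  then show ?thesis using lc_eq by (subst Bochner_Integration.integrable_cong[OF refl]) auto
qed

lemma hpay_integrable:
  assumes e: "0 < e" and A: "finite A"
  shows "integrable (PP e A) (\<lambda>p. hpay A B c (\<lambda>a. D a - p a))"
proof -
  interpret prob_space "PP e A" by (rule PP_prob[OF e])
  define Gt where "Gt T = {p \<in> space (PP e A). GG A T (\<lambda>a. D a - p a)}" for T
  have Gt_sets: "Gt T \<in> sets (PP e A)" if "T \<in> subsB A B" for T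
    unfolding Gt_def pred_def[symmetric] using PP_pred_GG[OF A] that by (auto simp: subsB_def)
  have eq: "hpay A B c (\<lambda>a. D a - p a) = (\<Sum>T\<in>subsB A B. Min (c ` T) * indicator (Gt T) p)"
    if "p \<in> space (PP e A)" for p
    using that unfolding hpay_def Gt_def by (intro sum.cong refl) (auto simp: indicator_def)
  have "integrable (PP e A) (\<lambda>p. \<Sum>T\<in>subsB A B. Min (c ` T) * indicator (Gt T) p)"
    using Gt_sets by (auto intro!: Bochner_Integration.integrable_sum integrable_mult_right integrable_real_indicator simp: less_top[symmetric])
  then show ?thesis using eq by (subst Bochner_Integration.integrable_cong[OF refl]) auto
qed

lemma btl:
  assumes A: "finite A" and inj: "inj_on idx A" and Ane: "A \<noteq> {}"
  shows "z \<in> A \<Longrightarrow> (\<Sum>t<n. lcost A idx (c t) (\<lambda>a. cum_cost c (Suc t) a - p a))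
          \<le> cum_cost c n z - p z + Max (p ` A)"
proof (induction n arbitrary: z)
  case 0
  then show ?case using A by (simp add: cum_cost_def)
next
  case (Suc n)
  obtain x where x: "lead A idx (\<lambda>a. cum_cost c (Suc n) a - p a) x" using lead_exists[OF A Ane] by blast
  have xA: "x \<in> A" using x by (simp add: lead_def)
  have cs: "cum_cost c (Suc n) a = cum_cost c n a + c n a" for a by (simp add: cum_cost_def)
  have "(\<Sum>t<Suc n. lcost A idx (c t) (\<lambda>a. cum_cost c (Suc t) a - p a))
      = (\<Sum>t<n. lcost A idx (c t) (\<lambda>a. cum_cost c (Suc t) a - p a)) + c n x"
    using lcost_lead[OF inj A x] by simp
  also have "\<dots> \<le> cum_cost c n x - p x + Max (p ` A) + c n x"
    using Suc.IH[OF xA] by simp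
  also have "\<dots> = cum_cost c (Suc n) x - p x + Max (p ` A)" by (simp add: cs)
  also have "\<dots> \<le> cum_cost c (Suc n) z - p z + Max (p ` A)"
    using x Suc.prems by (auto simp: lead_def)
  finally show ?case .
qed

lemma max_bound:
  fixes p :: "'a \<Rightarrow> real"
  assumes A: "finite A" "A \<noteq> {}"
  shows "Max (p ` A) \<le> u + (\<Sum>a\<in>A. max (p a - u) 0)"
proof -
  obtain a0 where a0: "a0 \<in> A" "Max (p ` A) = p a0"
    using A by (metis (no_types, lifting) Max_in finite_imageI image_iff image_is_empty)
  have "max (p a0 - u) 0 \<le> (\<Sum>a\<in>A. max (p a - u) 0)"
    by (rule member_le_sum[where i=a0 and f="\<lambda>a. max (p a - u) 0"]) (use A a0 in auto)
  then show ?thesis using a0 by linarith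
qed

lemma tail_sum_integral:
  assumes e: "0 < e" and A: "finite A" and u: "0 \<le> u"
  shows "integrable (PP e A) (\<lambda>p. \<Sum>a\<in>A. max (p a - u) 0)"
    and "(\<integral>p. (\<Sum>a\<in>A. max (p a - u) 0) \<partial>PP e A) = real (card A) * (exp (- u * e) / e)"
proof -
  have each_i: "integrable (PP e A) (\<lambda>p. max (p a - u) 0)" if a: "a \<in> A" for a
  proof -
    have "integrable (distr (PP e A) (Expo e) (\<lambda>p. p a)) (\<lambda>x. max (x - u) 0)"
      using PP_component[OF e a] Expo_tail(1)[OF e u] by simp
    then show ?thesis
      using measurable_component_singleton[OF a, of "\<lambda>_. Expo e"]
      by (subst (asm) integrable_distr_eq) auto
  qed
  have each_v: "(\<integral>p. max (p a - u) 0 \<partial>PP e A) = exp (- u * e) / e" if a: "a \<in> A" for a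
  proof -
    have "(\<integral>p. max (p a - u) 0 \<partial>PP e A) = (\<integral>x. max (x - u) 0 \<partial>distr (PP e A) (Expo e) (\<lambda>p. p a))"
      using measurable_component_singleton[OF a, of "\<lambda>_. Expo e"]
      by (subst integral_distr) auto
    also have "\<dots> = exp (- u * e) / e" using PP_component[OF e a] Expo_tail(2)[OF e u] by simp
    finally show ?thesis .
  qed
  show "integrable (PP e A) (\<lambda>p. \<Sum>a\<in>A. max (p a - u) 0)"
    using each_i by (auto intro!: Bochner_Integration.integrable_sum)
  show "(\<integral>p. (\<Sum>a\<in>A. max (p a - u) 0) \<partial>PP e A) = real (card A) * (exp (- u * e) / e)"
    using each_i each_v by (subst Bochner_Integration.integral_sum) auto
qed

lemma single_space_bound:
  fixes idx :: "'a \<Rightarrow> nat" and A :: "'a set"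
  assumes e: "0 < e" and A: "finite A" and Ane: "A \<noteq> {}" and inj: "inj_on idx A" and B: "1 \<le> B"
    and c: "valid_costs A c"
  shows "(1 - e ^ B) * (\<Sum>t<T. \<integral>p. hpay A B (c t) (\<lambda>a. cum_cost c t a - p a) \<partial>PP e A)
         \<le> best_arm_cost A c T + (1 + ln (real (card A))) / e"
proof -
  interpret prob_space "PP e A" by (rule PP_prob[OF e])
  define N where "N = real (card A)"
  have N1: "1 \<le> N" using A Ane by (simp add: N_def Suc_le_eq card_gt_0_iff)
  define u where "u = ln N / e"
  have u0: "0 \<le> u" using N1 e by (simp add: u_def)
  have eu: "exp (- u * e) = 1 / N" using N1 e by (simp add: u_def exp_minus exp_ln inverse_eq_divide)
  obtain z where z: "z \<in> A" "best_arm_cost A c T = cum_cost c T z"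
  proof -
    have "Min ((\<lambda>a. \<Sum>t<T. c t a) ` A) \<in> (\<lambda>a. \<Sum>t<T. c t a) ` A"
      using A Ane by (intro Min_in) auto
    then show ?thesis using that by (auto simp: best_arm_cost_def cum_cost_def)
  qed
  have cs: "(\<lambda>a. cum_cost c t a + c t a - p a) = (\<lambda>a. cum_cost c (Suc t) a - p a)" for t p
    by (simp add: cum_cost_def)
  have ct: "\<forall>a\<in>A. 0 \<le> c t a \<and> c t a \<le> 1" for t using c by (simp add: valid_costs_def)
  have "(1 - e ^ B) * (\<Sum>t<T. \<integral>p. hpay A B (c t) (\<lambda>a. cum_cost c t a - p a) \<partial>PP e A)
      = (\<Sum>t<T. (1 - e ^ B) * (\<integral>p. hpay A B (c t) (\<lambda>a. cum_cost c t a - p a) \<partial>PP e A))"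
    by (simp add: sum_distrib_left)
  also have "\<dots> \<le> (\<Sum>t<T. \<integral>p. lcost A idx (c t) (\<lambda>a. cum_cost c (Suc t) a - p a) \<partial>PP e A)"
  proof (intro sum_mono)
    fix t assume "t \<in> {..<T}"
    show "(1 - e ^ B) * (\<integral>p. hpay A B (c t) (\<lambda>a. cum_cost c t a - p a) \<partial>PP e A)
        \<le> (\<integral>p. lcost A idx (c t) (\<lambda>a. cum_cost c (Suc t) a - p a) \<partial>PP e A)"
      using round_bound[OF e A inj B ct[of t], where C="cum_cost c t"] unfolding cs .
  qed
  also have "\<dots> = (\<integral>p. (\<Sum>t<T. lcost A idx (c t) (\<lambda>a. cum_cost c (Suc t) a - p a)) \<partial>PP e A)"
    using lcost_integrable[OF e A] by (subst Bochner_Integration.integral_sum) auto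
  also have "\<dots> \<le> (\<integral>p. best_arm_cost A c T + u + (\<Sum>a\<in>A. max (p a - u) 0) \<partial>PP e A)"
  proof (rule integral_mono_AE)
    show "integrable (PP e A) (\<lambda>p. \<Sum>t<T. lcost A idx (c t) (\<lambda>a. cum_cost c (Suc t) a - p a))"
      using lcost_integrable[OF e A] by (auto intro!: Bochner_Integration.integrable_sum)
    show "integrable (PP e A) (\<lambda>p. best_arm_cost A c T + u + (\<Sum>a\<in>A. max (p a - u) 0))"
      using tail_sum_integral(1)[OF e A u0] by auto
    show "AE p in PP e A. (\<Sum>t<T. lcost A idx (c t) (\<lambda>a. cum_cost c (Suc t) a - p a))
        \<le> best_arm_cost A c T + u + (\<Sum>a\<in>A. max (p a - u) 0)"
      using PP_AE_nonneg[OF e A]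
    proof eventually_elim
      case (elim p)
      have "(\<Sum>t<T. lcost A idx (c t) (\<lambda>a. cum_cost c (Suc t) a - p a)) \<le> cum_cost c T z - p z + Max (p ` A)"
        by (rule btl[OF A inj Ane z(1)])
      also have "\<dots> \<le> cum_cost c T z + Max (p ` A)" using elim z by auto
      also have "\<dots> \<le> best_arm_cost A c T + u + (\<Sum>a\<in>A. max (p a - u) 0)"
        using max_bound[OF A Ane, of p u] z by simp
      finally show ?case .
    qed
  qed
  also have "\<dots> = best_arm_cost A c T + u + N * (exp (- u * e) / e)"
    using tail_sum_integral[OF e A u0] by (simp add: N_def prob_space)
  also have "\<dots> = best_arm_cost A c T + (1 + ln (real (card A))) / e"
  proof -
    have "N * (exp (- u * e) / e) = 1 / e" using eu N1 by simp
    then show ?thesis by (simp add: u_def N_def add_divide_distrib)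
  qed
  finally show ?thesis .
qed

abbreviation MM :: "real \<Rightarrow> nat \<Rightarrow> 'a set \<Rightarrow> ((nat \<times> 'a) \<Rightarrow> real) measure" where
  "MM e T A \<equiv> PiM ({..<T} \<times> A) (\<lambda>_. Expo e)"

definition proj :: "'a set \<Rightarrow> nat \<Rightarrow> ((nat \<times> 'a) \<Rightarrow> real) \<Rightarrow> ('a \<Rightarrow> real)" where
  "proj A t \<omega> = (\<lambda>a\<in>A. \<omega> (t, a))"

lemma proj_distr:
  assumes e: "0 < e" and t: "t < T"
  shows "distr (MM e T A) (PP e A) (proj A t) = PP e A"
proof -
  have "distr (MM e T A) (\<Pi>\<^sub>M i\<in>A. Expo e) (\<lambda>\<omega>. \<lambda>n\<in>A. \<omega> (t, n)) = (\<Pi>\<^sub>M i\<in>A. Expo e)"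
    using distr_PiM_reindex[of "{..<T} \<times> A" "\<lambda>_. Expo e" "\<lambda>a. (t, a)" A] Expo_prob[OF e] t
    by (auto simp: inj_on_def)
  then show ?thesis unfolding proj_def .
qed

lemma proj_meas:
  assumes t: "t < T"
  shows "proj A t \<in> MM e T A \<rightarrow>\<^sub>M PP e A"
  unfolding proj_def
  by (rule measurable_restrict) (use t in \<open>auto intro!: measurable_component_singleton\<close>)

lemma hpay_cong:
  assumes "\<forall>a\<in>A. w a = w' a"
  shows "hpay A B c w = hpay A B c w'"
proof -
  have "GG A T w = GG A T w'" if "T \<in> subsB A B" for T
  proof -
    have "\<forall>b\<in>T. w b = w' b" using that assms by (auto simp: subsB_def)
    moreover have "\<forall>a\<in>A - T. w a = w' a" using assms by auto
    ultimately show ?thesis unfolding GG_def by simp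
  qed
  then show ?thesis unfolding hpay_def by (intro sum.cong refl) auto
qed

definition hfun :: "'a set \<Rightarrow> nat \<Rightarrow> (nat \<Rightarrow> 'a \<Rightarrow> real) \<Rightarrow> nat \<Rightarrow> ((nat \<times> 'a) \<Rightarrow> real) \<Rightarrow> real" where
  "hfun A B c T \<omega> = (\<Sum>t<T. hpay A B (c t) (\<lambda>a. cum_cost c t a - proj A t \<omega> a))"

lemma hfun_integral:
  assumes e: "0 < e" and A: "finite A"
  shows "integrable (MM e T A) (hfun A B c T)"
    and "(\<integral>\<omega>. hfun A B c T \<omega> \<partial>MM e T A) = (\<Sum>t<T. \<integral>p. hpay A B (c t) (\<lambda>a. cum_cost c t a - p a) \<partial>PP e A)"
proof -
  have each_i: "integrable (MM e T A) (\<lambda>\<omega>. hpay A B (c t) (\<lambda>a. cum_cost c t a - proj A t \<omega> a))"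
    and each_v: "(\<integral>\<omega>. hpay A B (c t) (\<lambda>a. cum_cost c t a - proj A t \<omega> a) \<partial>MM e T A)
        = (\<integral>p. hpay A B (c t) (\<lambda>a. cum_cost c t a - p a) \<partial>PP e A)"
    if t: "t < T" for t
  proof -
    have hi: "integrable (PP e A) (\<lambda>p. hpay A B (c t) (\<lambda>a. cum_cost c t a - p a))"
      by (rule hpay_integrable[OF e A])
    then have hm: "(\<lambda>p. hpay A B (c t) (\<lambda>a. cum_cost c t a - p a)) \<in> borel_measurable (PP e A)"
      by (rule borel_measurable_integrable)
    have "integrable (distr (MM e T A) (PP e A) (proj A t)) (\<lambda>p. hpay A B (c t) (\<lambda>a. cum_cost c t a - p a))"
      by (subst proj_distr[OF e t]) (rule hi)
    then show "integrable (MM e T A) (\<lambda>\<omega>. hpay A B (c t) (\<lambda>a. cum_cost c t a - proj A t \<omega> a))"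
      using proj_meas[OF t] hm by (subst (asm) integrable_distr_eq) auto
    have "(\<integral>\<omega>. hpay A B (c t) (\<lambda>a. cum_cost c t a - proj A t \<omega> a) \<partial>MM e T A)
        = (\<integral>p. hpay A B (c t) (\<lambda>a. cum_cost c t a - p a) \<partial>distr (MM e T A) (PP e A) (proj A t))"
      using proj_meas[OF t] hm by (subst integral_distr) auto
    then show "(\<integral>\<omega>. hpay A B (c t) (\<lambda>a. cum_cost c t a - proj A t \<omega> a) \<partial>MM e T A)
        = (\<integral>p. hpay A B (c t) (\<lambda>a. cum_cost c t a - p a) \<partial>PP e A)"
      by (subst (asm) proj_distr[OF e t])
  qed
  show "integrable (MM e T A) (hfun A B c T)"
    unfolding hfun_def using each_i by (auto intro!: Bochner_Integration.integrable_sum)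
  show "(\<integral>\<omega>. hfun A B c T \<omega> \<partial>MM e T A) = (\<Sum>t<T. \<integral>p. hpay A B (c t) (\<lambda>a. cum_cost c t a - p a) \<partial>PP e A)"
    unfolding hfun_def using each_i each_v by (subst Bochner_Integration.integral_sum) auto
qed

lemma MM_ties:
  assumes e: "0 < e" and A: "finite A"
  shows "AE \<omega> in MM e T A. \<forall>t\<in>{..<T}. tiefree A (\<lambda>a. cum_cost c t a - \<omega> (t, a))"
proof (rule AE_finite_allI)
  fix t assume "t \<in> {..<T}"
  then have t: "t < T" by simp
  have "AE p in distr (MM e T A) (PP e A) (proj A t). tiefree A (\<lambda>a. cum_cost c t a - p a)"
    by (subst proj_distr[OF e t]) (use PP_ties[OF e A, of "cum_cost c t"] in \<open>simp add: tiefree_def\<close>)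
  then have "AE \<omega> in MM e T A. tiefree A (\<lambda>a. cum_cost c t a - proj A t \<omega> a)"
    by (rule AE_distrD[OF proj_meas[OF t]])
  then show "AE \<omega> in MM e T A. tiefree A (\<lambda>a. cum_cost c t a - \<omega> (t, a))"
    by eventually_elim (simp add: tiefree_def proj_def)
qed simp

lemma fpml_eq_hfun:
  assumes A: "finite A" and vt: "valid_tiebreak A B sel"
    and tf: "\<forall>t\<in>{..<T}. tiefree A (\<lambda>a. cum_cost c t a - \<omega> (t, a))"
  shows "fpml_cost sel c T \<omega> = hfun A B c T \<omega>"
  unfolding fpml_cost_def hfun_def
proof (intro sum.cong refl)
  fix t assume t: "t \<in> {..<T}"
  define v where "v = (\<lambda>a. cum_cost c t a - \<omega> (t, a))"
  have S: "sel t v \<subseteq> A" "card (sel t v) = B" "\<forall>a\<in>sel t v. \<forall>b\<in>A - sel t v. v a \<le> v b"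
    using vt unfolding valid_tiebreak_def by blast+
  have "hpay A B (c t) (\<lambda>a. cum_cost c t a - proj A t \<omega> a) = hpay A B (c t) v"
    by (rule hpay_cong) (simp add: proj_def v_def)
  also have "\<dots> = Min (c t ` sel t v)"
    using hpay_tiefree[OF A _ _, of v "sel t v" B "c t"] tf t S
    by (auto simp: v_def subsB_def GG_def)
  finally show "Min (c t ` fpml_set sel c \<omega> t) = hpay A B (c t) (\<lambda>a. cum_cost c t a - proj A t \<omega> a)"
    by (simp add: fpml_set_def v_def)
qed

lemma fpml_bounds:
  assumes A: "finite A" and B: "1 \<le> B" and vt: "valid_tiebreak A B sel" and c: "valid_costs A c"
  shows "0 \<le> fpml_cost sel c T \<omega>" and "fpml_cost sel c T \<omega> \<le> real T"
proof -
  have each: "0 \<le> Min (c t ` fpml_set sel c \<omega> t) \<and> Min (c t ` fpml_set sel c \<omega> t) \<le> 1" for t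
  proof -
    define S where "S = fpml_set sel c \<omega> t"
    have S: "S \<subseteq> A" "card S = B" using vt unfolding valid_tiebreak_def S_def fpml_set_def by blast+
    then have fS: "finite S" "S \<noteq> {}" using A B finite_subset by auto
    then obtain a where a: "a \<in> S" by auto
    have "0 \<le> Min (c t ` S)" using fS S c by (auto simp: Min_ge_iff valid_costs_def)
    moreover have "Min (c t ` S) \<le> 1" using fS S c a by (auto simp: Min_le_iff valid_costs_def intro!: bexI[of _ a])
    ultimately show ?thesis by (simp add: S_def)
  qed
  show "0 \<le> fpml_cost sel c T \<omega>" unfolding fpml_cost_def using each by (intro sum_nonneg) auto
  have "fpml_cost sel c T \<omega> \<le> (\<Sum>t<T. 1)" unfolding fpml_cost_def using each by (intro sum_mono) auto
  then show "fpml_cost sel c T \<omega> \<le> real T" by simp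
qed

lemma best_nonneg:
  assumes A: "finite A" "A \<noteq> {}" and c: "valid_costs A c"
  shows "0 \<le> best_arm_cost A c T"
  unfolding best_arm_cost_def using A c
  by (auto simp: Min_ge_iff valid_costs_def intro!: sum_nonneg)

lemma part1:
  fixes A :: "'a set" and B :: nat and sel :: "nat \<Rightarrow> ('a \<Rightarrow> real) \<Rightarrow> 'a set"
  assumes A: "finite A" and B: "1 \<le> B" and BA: "B \<le> card A" and vt: "valid_tiebreak A B sel"
    and e: "0 < e" and c: "valid_costs A c"
  shows "(\<integral>\<omega>. (1 - e ^ B) * fpml_cost sel c T \<omega> - best_arm_cost A c T \<partial>fpml_space e T A)
         \<le> (1 + ln (real (card A))) / e"
proof -
  have Ane: "A \<noteq> {}" using B BA by auto
  have N1: "1 \<le> real (card A)" using A Ane by (simp add: Suc_le_eq card_gt_0_iff)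
  have rhs: "0 \<le> (1 + ln (real (card A))) / e" using N1 e by simp
  obtain idx :: "'a \<Rightarrow> nat" where inj: "inj_on idx A"
    using finite_imp_inj_to_nat_seg[OF A] by blast
  interpret Mp: prob_space "MM e T A" by (intro prob_space_PiM Expo_prob e)
  let ?F = "\<lambda>\<omega>. (1 - e ^ B) * fpml_cost sel c T \<omega> - best_arm_cost A c T"
  let ?G = "\<lambda>\<omega>. (1 - e ^ B) * hfun A B c T \<omega> - best_arm_cost A c T"
  have sp: "fpml_space e T A = completion (MM e T A)" by (simp add: fpml_space_def)
  show ?thesis
  proof (cases "integrable (fpml_space e T A) ?F")
    case False
    then show ?thesis using rhs by (simp add: not_integrable_integral_eq)
  next
    case True
    have AEeq: "AE \<omega> in MM e T A. ?F \<omega> = ?G \<omega>"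
      using MM_ties[OF e A, of T c] by eventually_elim (simp add: fpml_eq_hfun[OF A vt])
    have Gi: "integrable (MM e T A) ?G" using hfun_integral(1)[OF e A, of T B c] by auto
    have Gm: "?G \<in> borel_measurable (MM e T A)" using Gi by (rule borel_measurable_integrable)
    have "(\<integral>\<omega>. ?F \<omega> \<partial>fpml_space e T A) = (\<integral>\<omega>. ?G \<omega> \<partial>completion (MM e T A))"
      unfolding sp
    proof (rule integral_cong_AE)
      show "?F \<in> borel_measurable (completion (MM e T A))"
        using True unfolding sp by (rule borel_measurable_integrable)
      show "?G \<in> borel_measurable (completion (MM e T A))" using Gm by (rule measurable_completion)
      show "AE \<omega> in completion (MM e T A). ?F \<omega> = ?G \<omega>" using AEeq by (rule AE_completion)
    qed
    also have "\<dots> = (\<integral>\<omega>. ?G \<omega> \<partial>MM e T A)" using Gm by (rule integral_completion)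
    also have "\<dots> = (1 - e ^ B) * (\<integral>\<omega>. hfun A B c T \<omega> \<partial>MM e T A) - best_arm_cost A c T"
      using hfun_integral(1)[OF e A, of T B c] by (simp add: Mp.prob_space)
    also have "\<dots> = (1 - e ^ B) * (\<Sum>t<T. \<integral>p. hpay A B (c t) (\<lambda>a. cum_cost c t a - p a) \<partial>PP e A) - best_arm_cost A c T"
      by (simp add: hfun_integral(2)[OF e A])
    also have "\<dots> \<le> (1 + ln (real (card A))) / e"
      using single_space_bound[OF e A Ane inj B c, of T] by simp
    finally show ?thesis .
  qed
qed

lemma powr_identity:
  fixes L T :: real and B :: nat
  assumes L: "0 < L" and T: "0 < T"
  defines "eps \<equiv> (L / T) powr (1 / (real B + 1))"
  shows "L / eps + eps ^ B * T = 2 * T powr (1 / (real B + 1)) * L powr (real B / (real B + 1))"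
proof -
  define r where "r = 1 / (real B + 1)"
  define s where "s = real B / (real B + 1)"
  have rs: "r + s = 1" by (simp add: r_def s_def field_simps)
  have rB: "r * real B = s" by (simp add: r_def s_def)
  have LT: "0 < L / T" using L T by simp
  have e1: "eps = L powr r / T powr r" unfolding eps_def r_def using L T by (simp add: powr_divide)
  have e2: "eps ^ B = L powr s / T powr s"
  proof -
    have "eps ^ B = eps powr real B" unfolding eps_def by (rule powr_realpow[symmetric]) (use L T in simp)
    also have "\<dots> = (L / T) powr s" unfolding eps_def r_def[symmetric] by (simp add: powr_powr rB)
    also have "\<dots> = L powr s / T powr s" using L T by (simp add: powr_divide)
    finally show ?thesis .
  qed
  have Ls: "L powr r * L powr s = L" using L by (simp add: powr_add[symmetric] rs)
  have Ts: "T powr r * T powr s = T" using T by (simp add: powr_add[symmetric] rs)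
  have pos: "0 < L powr r" "0 < T powr r" "0 < L powr s" "0 < T powr s" using L T by auto
  have "L / eps = (L powr r * L powr s) * T powr r / L powr r"
    unfolding e1 Ls using pos by simp
  also have "\<dots> = L powr s * T powr r" using pos by simp
  finally have 1: "L / eps = L powr s * T powr r" .
  have "eps ^ B * T = L powr s / T powr s * (T powr r * T powr s)"
    unfolding e2 Ts ..
  also have "\<dots> = L powr s * T powr r" using pos by simp
  finally have 2: "eps ^ B * T = L powr s * T powr r" .
  from 1 2 show ?thesis by (simp add: r_def s_def)
qed

theorem theorem2:
  fixes A :: "'a set" and B :: nat
    and sel :: "nat \<Rightarrow> ('a \<Rightarrow> real) \<Rightarrow> 'a set"
  assumes "finite A" and "1 \<le> B" and "B \<le> card A"
    and "valid_tiebreak A B sel"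
  shows "(\<forall>eps T c. eps > 0 \<longrightarrow> valid_costs A c \<longrightarrow>
            (\<integral>\<omega>. (1 - eps ^ B) * fpml_cost sel c T \<omega> - best_arm_cost A c T
               \<partial>fpml_space eps T A)
            \<le> (1 + ln (real (card A))) / eps)
       \<and> (\<forall>T c. T \<ge> 1 \<longrightarrow> valid_costs A c \<longrightarrow>
            (let eps = ((ln (real (card A)) + 1) / real T) powr (1 / (real B + 1)) in
             (\<integral>\<omega>. fpml_cost sel c T \<omega> - best_arm_cost A c T \<partial>fpml_space eps T A)
             \<le> 2 * real T powr (1 / (real B + 1))
                  * (1 + ln (real (card A))) powr (real B / (real B + 1))))"
proof (intro conjI allI impI)
  fix eps :: real and T :: nat and c
  assume "0 < eps" "valid_costs A c"
  then show "(\<integral>\<omega>. (1 - eps ^ B) * fpml_cost sel c T \<omega> - best_arm_cost A c T \<partial>fpml_space eps T A)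
            \<le> (1 + ln (real (card A))) / eps"
    using part1[OF assms] by blast
next
  fix T :: nat and c
  assume T1: "1 \<le> T" and c: "valid_costs A c"
  have A: "finite A" and B: "1 \<le> B" and vt: "valid_tiebreak A B sel" using assms by auto
  have Ane: "A \<noteq> {}" using assms by auto
  have N1: "1 \<le> real (card A)" using A Ane by (simp add: Suc_le_eq card_gt_0_iff)
  define L where "L = 1 + ln (real (card A))"
  have L0: "0 < L" using N1 by (simp add: L_def add_pos_nonneg)
  have T0: "0 < real T" using T1 by simp
  define eps where "eps = (L / real T) powr (1 / (real B + 1))"
  have e: "0 < eps" using L0 T0 by (simp add: eps_def)
  have eps_eq: "((ln (real (card A)) + 1) / real T) powr (1 / (real B + 1)) = eps"
    by (simp add: eps_def L_def add.commute)
  have rhs_pos: "0 \<le> 2 * real T powr (1 / (real B + 1)) * L powr (real B / (real B + 1))"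
    by simp
  let ?M = "fpml_space eps T A"
  have pM: "prob_space ?M"
    unfolding fpml_space_def by (intro prob_space.prob_space_completion prob_space_PiM Expo_prob e)
  interpret Mp: prob_space ?M by (rule pM)
  let ?F2 = "\<lambda>\<omega>. fpml_cost sel c T \<omega> - best_arm_cost A c T"
  let ?F1 = "\<lambda>\<omega>. (1 - eps ^ B) * fpml_cost sel c T \<omega> - best_arm_cost A c T"
  have "(\<integral>\<omega>. ?F2 \<omega> \<partial>?M) \<le> 2 * real T powr (1 / (real B + 1)) * L powr (real B / (real B + 1))"
  proof (cases "integrable ?M ?F2")
    case False
    then show ?thesis using rhs_pos by (simp add: not_integrable_integral_eq)
  next
    case True
    have fi: "integrable ?M (fpml_cost sel c T)"
    proof -
      have "integrable ?M (\<lambda>\<omega>. ?F2 \<omega> + best_arm_cost A c T)"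
        by (rule Bochner_Integration.integrable_add[OF True]) simp
      then show ?thesis by simp
    qed
    have f1i: "integrable ?M ?F1" using fi by auto
    have "(\<integral>\<omega>. ?F2 \<omega> \<partial>?M) = (\<integral>\<omega>. ?F1 \<omega> + eps ^ B * fpml_cost sel c T \<omega> \<partial>?M)"
      by (rule Bochner_Integration.integral_cong) (auto simp: algebra_simps)
    also have "\<dots> = (\<integral>\<omega>. ?F1 \<omega> \<partial>?M) + eps ^ B * (\<integral>\<omega>. fpml_cost sel c T \<omega> \<partial>?M)"
      using f1i fi by simp
    also have "\<dots> \<le> L / eps + eps ^ B * real T"
    proof (rule add_mono)
      show "(\<integral>\<omega>. ?F1 \<omega> \<partial>?M) \<le> L / eps" unfolding L_def using part1[OF assms e c] .
      have "(\<integral>\<omega>. fpml_cost sel c T \<omega> \<partial>?M) \<le> (\<integral>\<omega>. real T \<partial>?M)"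
        using fi fpml_bounds(2)[OF A B vt c] by (intro integral_mono) auto
      also have "\<dots> = real T" by (simp add: Mp.prob_space)
      finally show "eps ^ B * (\<integral>\<omega>. fpml_cost sel c T \<omega> \<partial>?M) \<le> eps ^ B * real T"
        using e by (intro mult_left_mono) auto
    qed
    also have "\<dots> = 2 * real T powr (1 / (real B + 1)) * L powr (real B / (real B + 1))"
      unfolding eps_def by (rule powr_identity[OF L0 T0])
    finally show ?thesis .
  qed
  then show "let eps = ((ln (real (card A)) + 1) / real T) powr (1 / (real B + 1)) in
             (\<integral>\<omega>. fpml_cost sel c T \<omega> - best_arm_cost A c T \<partial>fpml_space eps T A)
             \<le> 2 * real T powr (1 / (real B + 1))
                  * (1 + ln (real (card A))) powr (real B / (real B + 1))"
    unfolding eps_eq Let_def L_def .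
qed

end
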